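(* For every $l\in\mathbb N$, the real curve $\Gamma_l(\mathbb R)=\{(\lambda,\mu)\in\mathbb R^2:P_l(\lambda,\mu^2)=0\}$ has no ovals in the affine plane $\mathbb R^2_{(\lambda,\mu)}$, and (its projective closure) has no ovals contained in the closure of the half-plane $\{\mu>0\}$ in the projective plane $\mathbb{RP}^2\supset\mathbb R^2_{(\lambda,\mu)}$.
   Context: For $l\in\mathbb N$ and $\mu\in\mathbb C$, $H_l$ is the tridiagonal $l\times l$ matrix with entries $H_{l;jj}=(1-j)(l-j+1)$, $H_{l;j,j+1}=\mu j$, $H_{l;j,j-1}=\mu(l-j+1)$, and $H_{l;ij}=0$ if $|i-j|\geq 2$; $\det(H_l+\lambda\,\mathrm{Id})$ is a polynomial of degree $l$ in $(\lambda,\mu^2)$, written $P_l(\lambda,\mu^2)$. An oval of a real planar projective algebraic curve $\Gamma$ is a subset of $\Gamma$ that is analytically parametrized by a circle, the parametrization being bijective except possibly at singular points of the curve (an oval may contain singular points, and the parametrization may have zero derivative at some of them). *)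

theory Defs
  imports Complex_Main "Jordan_Normal_Form.Determinant"
begin

(* The tridiagonal l x l matrix H_l (paper indices j = 1..l, here i = j - 1 = 0..l-1):
   H_{jj} = (1-j)(l-j+1),  H_{j,j+1} = mu*j,  H_{j,j-1} = mu*(l-j+1). *)
definition H :: "nat \<Rightarrow> real \<Rightarrow> real mat" where
  "H l mu = mat l l (\<lambda>(i, k).
     if k = i then (1 - real (i+1)) * (real l - real (i+1) + 1)
     else if k = i + 1 then mu * real (i+1)
     else if i = k + 1 then mu * (real l - real (i+1) + 1)
     else 0)"

(* Q l lam mu = det (H_l + lam Id) = P_l(lam, mu^2) *)
definition Q :: "nat \<Rightarrow> real \<Rightarrow> real \<Rightarrow> real" where
  "Q l lam mu = det (H l mu + lam \<cdot>\<^sub>m one_mat l)"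

definition Gamma :: "nat \<Rightarrow> (real \<times> real) set" where
  "Gamma l = {(lam, mu). Q l lam mu = 0}"

(* homogenization of Q (total degree l in (lam,mu)): every entry of H_l + lam Id is
   affine-linear in (lam,mu), so the degree-l homogenization is the determinant of the
   matrix with the constant diagonal terms multiplied by z. *)
definition Qh :: "nat \<Rightarrow> real \<Rightarrow> real \<Rightarrow> real \<Rightarrow> real" where
  "Qh l lam mu z = det (mat l l (\<lambda>(i, k).
     if k = i then lam + z * ((1 - real (i+1)) * (real l - real (i+1) + 1))
     else if k = i + 1 then mu * real (i+1)
     else if i = k + 1 then mu * (real l - real (i+1) + 1)
     else 0))"

definition real_analytic :: "(real \<Rightarrow> real) \<Rightarrow> bool" where
  "real_analytic f \<longleftrightarrow> (\<forall>t0. \<exists>r>0. \<exists>a. \<forall>t. \<bar>t - t0\<bar> < r \<longrightarrow>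
      (\<lambda>n. a n * (t - t0) ^ n) sums f t)"

definition sing_aff :: "nat \<Rightarrow> real \<times> real \<Rightarrow> bool" where
  "sing_aff l p \<longleftrightarrow> Q l (fst p) (snd p) = 0
     \<and> ((\<lambda>x. Q l x (snd p)) has_real_derivative 0) (at (fst p))
     \<and> ((\<lambda>y. Q l (fst p) y) has_real_derivative 0) (at (snd p))"

(* an oval of Gamma_l(R) in the affine plane: image of a real-analytic 1-periodic map
   (i.e. a map from the circle R/Z), nonconstant, injective on [0,1) except at points
   mapped to singular points *)
definition is_oval_aff :: "nat \<Rightarrow> (real \<times> real) set \<Rightarrow> bool" where
  "is_oval_aff l S \<longleftrightarrow> (\<exists>\<gamma> :: real \<Rightarrow> real \<times> real.
      real_analytic (\<lambda>t. fst (\<gamma> t)) \<and> real_analytic (\<lambda>t. snd (\<gamma> t))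
    \<and> (\<forall>t. \<gamma> (t + 1) = \<gamma> t)
    \<and> (\<exists>s t. \<gamma> s \<noteq> \<gamma> t)
    \<and> \<gamma> ` UNIV = S
    \<and> S \<subseteq> Gamma l
    \<and> (\<forall>s t. 0 \<le> s \<and> s < 1 \<and> 0 \<le> t \<and> t < 1 \<and> s \<noteq> t \<and> \<gamma> s = \<gamma> t
           \<longrightarrow> sing_aff l (\<gamma> s)))"

(* Real projective plane RP^2 with homogeneous coordinates [lam : mu : z]; the affine plane
   is embedded as (lam,mu) |-> [lam : mu : 1]. *)
definition proj_pt :: "real \<times> real \<times> real \<Rightarrow> (real \<times> real \<times> real) set" where
  "proj_pt v = {(c * fst v, c * fst (snd v), c * snd (snd v)) | c. c \<noteq> 0}"

definition sing_proj :: "nat \<Rightarrow> real \<times> real \<times> real \<Rightarrow> bool" where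
  "sing_proj l v \<longleftrightarrow> (case v of (x, y, z) \<Rightarrow>
       Qh l x y z = 0
     \<and> ((\<lambda>a. Qh l a y z) has_real_derivative 0) (at x)
     \<and> ((\<lambda>b. Qh l x b z) has_real_derivative 0) (at y)
     \<and> ((\<lambda>c. Qh l x y c) has_real_derivative 0) (at z))"

(* v (nonzero) represents a point of the closure in RP^2 of the affine half-plane {mu > 0}:
   it is a limit of representatives of points (lam,mu) with mu > 0 *)
definition in_closure_upper :: "real \<times> real \<times> real \<Rightarrow> bool" where
  "in_closure_upper v \<longleftrightarrow> (\<exists>w :: nat \<Rightarrow> real \<times> real \<times> real.
      (\<forall>n. snd (snd (w n)) \<noteq> 0 \<and> fst (snd (w n)) / snd (snd (w n)) > 0)
    \<and> (\<lambda>n. fst (w n)) \<longlonglongrightarrow> fst v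
    \<and> (\<lambda>n. fst (snd (w n))) \<longlonglongrightarrow> fst (snd v)
    \<and> (\<lambda>n. snd (snd (w n))) \<longlonglongrightarrow> snd (snd v))"

(* an oval of the projective closure of Gamma_l(R): image in RP^2 of a real-analytic map
   from the circle, given by a real-analytic nowhere-zero lift F : R -> R^3 whose projective
   class is 1-periodic; nonconstant, contained in {Qh l = 0}, injective on [0,1) except
   at points mapped to singular points *)
definition is_oval_proj :: "nat \<Rightarrow> (real \<times> real \<times> real) set set \<Rightarrow> bool" where
  "is_oval_proj l S \<longleftrightarrow> (\<exists>F :: real \<Rightarrow> real \<times> real \<times> real.
      real_analytic (\<lambda>t. fst (F t)) \<and> real_analytic (\<lambda>t. fst (snd (F t)))
    \<and> real_analytic (\<lambda>t. snd (snd (F t)))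
    \<and> (\<forall>t. F t \<noteq> (0, 0, 0))
    \<and> (\<forall>t. proj_pt (F (t + 1)) = proj_pt (F t))
    \<and> (\<exists>s t. proj_pt (F s) \<noteq> proj_pt (F t))
    \<and> (\<lambda>t. proj_pt (F t)) ` UNIV = S
    \<and> (\<forall>t. Qh l (fst (F t)) (fst (snd (F t))) (snd (snd (F t))) = 0)
    \<and> (\<forall>s t. 0 \<le> s \<and> s < 1 \<and> 0 \<le> t \<and> t < 1 \<and> s \<noteq> t
           \<and> proj_pt (F s) = proj_pt (F t) \<longrightarrow> sing_proj l (F s)))"

end

theory Submission
  imports Defs "HOL-Analysis.Product_Vector"
begin


lemma tridiag_det:
  fixes f :: "nat \<Rightarrow> nat \<Rightarrow> real"
  assumes tri: "\<And>i k. k > i + 1 \<Longrightarrow> f i k = 0" "\<And>i k. i > k + 1 \<Longrightarrow> f i k = 0"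
  shows "det (mat (Suc (Suc n)) (Suc (Suc n)) (\<lambda>(i,k). f i k))
     = f (Suc n) (Suc n) * det (mat (Suc n) (Suc n) (\<lambda>(i,k). f i k))
       - f (Suc n) n * f n (Suc n) * det (mat n n (\<lambda>(i,k). f i k))"
proof -
  define T where "T m = mat m m (\<lambda>(i,k). f i k)" for m
  have c2: "T (Suc (Suc n)) \<in> carrier_mat (Suc (Suc n)) (Suc (Suc n))" unfolding T_def by auto
  have "det (T (Suc (Suc n))) = (\<Sum>j<Suc (Suc n). T (Suc (Suc n)) $$ (Suc n, j) * cofactor (T (Suc (Suc n))) (Suc n) j)"
    by (rule laplace_expansion_row[OF c2]) auto
  also have "\<dots> = f (Suc n) n * cofactor (T (Suc (Suc n))) (Suc n) n
     + f (Suc n) (Suc n) * cofactor (T (Suc (Suc n))) (Suc n) (Suc n)"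
  proof -
    have "(\<Sum>j<n. T (Suc (Suc n)) $$ (Suc n, j) * cofactor (T (Suc (Suc n))) (Suc n) j) = 0"
      by (rule sum.neutral) (auto simp: T_def tri)
    then show ?thesis by (simp add: T_def)
  qed
  also have "cofactor (T (Suc (Suc n))) (Suc n) (Suc n) = det (T (Suc n))"
  proof -
    have "mat_delete (T (Suc (Suc n))) (Suc n) (Suc n) = T (Suc n)"
      by (rule eq_matI) (auto simp: T_def mat_delete_def)
    then show ?thesis unfolding cofactor_def by simp
  qed
  also have "cofactor (T (Suc (Suc n))) (Suc n) n = - (f n (Suc n) * det (T n))"
  proof -
    define M where "M = mat_delete (T (Suc (Suc n))) (Suc n) n"
    have cM: "M \<in> carrier_mat (Suc n) (Suc n)" unfolding M_def T_def mat_delete_def by auto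
    have "det M = (\<Sum>i<Suc n. M $$ (i, n) * cofactor M i n)"
      by (rule laplace_expansion_column[OF cM]) auto
    also have "\<dots> = M $$ (n, n) * cofactor M n n"
    proof -
      have "(\<Sum>i<n. M $$ (i, n) * cofactor M i n) = 0"
        by (rule sum.neutral) (auto simp: M_def T_def mat_delete_def tri)
      then show ?thesis by simp
    qed
    also have "M $$ (n, n) = f n (Suc n)" by (simp add: M_def T_def mat_delete_def)
    finally have dM1: "det M = f n (Suc n) * cofactor M n n" .
    have "mat_delete M n n = T n"
      by (rule eq_matI) (auto simp: M_def T_def mat_delete_def)
    then have "det M = f n (Suc n) * det (T n)" using dM1 by (simp add: cofactor_def)
    then show ?thesis unfolding cofactor_def M_def[symmetric] by simp
  qed
  finally show ?thesis unfolding T_def by (simp add: algebra_simps)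
qed

definition dd :: "nat \<Rightarrow> nat \<Rightarrow> real" where
  "dd l i = (1 - real (i+1)) * (real l - real (i+1) + 1)"

definition bt :: "nat \<Rightarrow> nat \<Rightarrow> real" where
  "bt l n = (real l - real (n+2) + 1) * real (n+1)"

fun R :: "nat \<Rightarrow> nat \<Rightarrow> real \<Rightarrow> real \<Rightarrow> real \<Rightarrow> real" where
  "R l 0 a b c = 1"
| "R l (Suc 0) a b c = a + c * dd l 0"
| "R l (Suc (Suc n)) a b c = (a + c * dd l (Suc n)) * R l (Suc n) a b c
     - b^2 * bt l n * R l n a b c"

fun Dr :: "nat \<Rightarrow> nat \<Rightarrow> real \<Rightarrow> real \<Rightarrow> real \<Rightarrow> real" where
  "Dr l 0 a b c = 0"
| "Dr l (Suc 0) a b c = 1"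
| "Dr l (Suc (Suc n)) a b c = R l (Suc n) a b c + (a + c * dd l (Suc n)) * Dr l (Suc n) a b c
     - b^2 * bt l n * Dr l n a b c"

definition ent :: "nat \<Rightarrow> real \<Rightarrow> real \<Rightarrow> real \<Rightarrow> nat \<Rightarrow> nat \<Rightarrow> real" where
  "ent l a b c i k = (if k = i then a + c * ((1 - real (i+1)) * (real l - real (i+1) + 1))
     else if k = i + 1 then b * real (i+1)
     else if i = k + 1 then b * (real l - real (i+1) + 1)
     else 0)"

lemma det_ent: "det (mat n n (\<lambda>(i,k). ent l a b c i k)) = R l n a b c"
proof (induction l n a b c rule: R.induct)
  case (1 l a b c)
  then show ?case by simp
next
  case (2 l a b c)
  have "mat 1 1 (\<lambda>(i,k). ent l a b c i k) = mat 1 1 (\<lambda>_. a + c * dd l 0)"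
    by (rule eq_matI) (auto simp: ent_def dd_def)
  moreover have "det (mat 1 1 (\<lambda>_. a + c * dd l 0)) = a + c * dd l 0"
    by (subst det_upper_triangular[of _ 1]) (auto simp: upper_triangular_def diag_mat_def)
  ultimately show ?case by simp
next
  case (3 l n a b c)
  show ?case
    apply (subst tridiag_det)
      apply (simp add: ent_def)
     apply (simp add: ent_def)
    apply (simp only: 3)
    by (auto simp: ent_def dd_def bt_def power2_eq_square algebra_simps)
qed

lemma Qh_R: "Qh l a b c = R l l a b c"
  unfolding Qh_def det_ent[symmetric] ent_def by simp

lemma Q_R: "Q l a b = R l l a b 1"
proof -
  have "H l b + a \<cdot>\<^sub>m 1\<^sub>m l = mat l l (\<lambda>(i,k). ent l a b 1 i k)"
    by (rule eq_matI) (auto simp: H_def ent_def)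
  then show ?thesis unfolding Q_def by (simp add: det_ent)
qed

lemma R_hom: "R l n (k*a) (k*b) (k*c) = k^n * R l n a b c"
  by (induction l n a b c rule: R.induct) (auto simp: algebra_simps power2_eq_square)

lemma R_deriv: "((\<lambda>a. R l n a b c) has_real_derivative Dr l n a b c) (at a)"
  by (induction l n a b c rule: R.induct) (auto intro!: derivative_eq_intros)

lemma Dr_cont:
  assumes "continuous_on S fa" "continuous_on S fb" "continuous_on S fc"
  shows "continuous_on S (\<lambda>p. R l n (fa p) (fb p) (fc p)) \<and> continuous_on S (\<lambda>p. Dr l n (fa p) (fb p) (fc p))"
proof (induction n rule: nat_less_induct)
  case (1 n)
  show ?case
  proof (cases n)
    case 0 then show ?thesis by (auto intro!: continuous_intros)
  next
    case (Suc m) note m = this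
    show ?thesis
    proof (cases m)
      case 0 then show ?thesis using m assms by (auto intro!: continuous_intros)
    next
      case (Suc k)
      then show ?thesis using m assms 1[rule_format, of k] 1[rule_format, of "Suc k"]
        by (auto intro!: continuous_intros)
    qed
  qed
qed

lemma W_pos:
  assumes "b \<noteq> 0" "Suc n \<le> l"
  shows "Dr l (Suc n) a b c * R l n a b c - R l (Suc n) a b c * Dr l n a b c > 0"
  using assms
proof (induction n)
  case 0 then show ?case by simp
next
  case (Suc n)
  have bt: "bt l n > 0" using Suc.prems unfolding bt_def by auto
  have "b^2 > 0" using Suc.prems by simp
  then have p: "b^2 * bt l n > 0" using bt by simp
  have IH: "Dr l (Suc n) a b c * R l n a b c - R l (Suc n) a b c * Dr l n a b c > 0"
    using Suc by auto
  have eq: "Dr l (Suc (Suc n)) a b c * R l (Suc n) a b c - R l (Suc (Suc n)) a b c * Dr l (Suc n) a b c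
     = (R l (Suc n) a b c)^2 + b^2 * bt l n * (Dr l (Suc n) a b c * R l n a b c - R l (Suc n) a b c * Dr l n a b c)"
    by (simp add: algebra_simps power2_eq_square)
  show ?case unfolding eq using p IH by (intro add_nonneg_pos) auto
qed

lemma simple_root:
  assumes "b \<noteq> 0" "R l l a b c = 0"
  shows "Dr l l a b c \<noteq> 0"
proof (cases l)
  case 0 then show ?thesis using assms by simp
next
  case (Suc n)
  have "Dr l (Suc n) a b c * R l n a b c - R l (Suc n) a b c * Dr l n a b c > 0"
    using W_pos[of b n l a c] assms Suc by simp
  then show ?thesis using assms Suc by auto
qed

lemma R_mu0: "R l n a 0 c = (\<Prod>i<n. a + c * dd l i)"
  by (induction l n a "0::real" c rule: R.induct) (auto simp: lessThan_Suc algebra_simps)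


lemma analytic_isCont:
  assumes "real_analytic f"
  shows "isCont f t0"
proof -
  obtain r a where r: "r > 0" and sa: "\<And>t. \<bar>t - t0\<bar> < r \<Longrightarrow> (\<lambda>n. a n * (t - t0) ^ n) sums f t"
    using assms unfolding real_analytic_def by blast
  define g where "g x = (\<Sum>n. a n * x ^ n)" for x :: real
  have "summable (\<lambda>n. a n * (r/2) ^ n)"
    using sa[of "t0 + r/2"] r by (auto simp: sums_iff)
  then have "isCont (\<lambda>x. \<Sum>n. a n * x^n) 0"
    by (rule isCont_powser) (use r in auto)
  then have c0: "isCont g 0" unfolding g_def .
  have "isCont (\<lambda>t. g (t - t0)) t0"
    using isCont_o2[where f="\<lambda>t. t - t0" and a=t0 and g=g] c0 by (auto intro!: continuous_intros)
  moreover have "eventually (\<lambda>t. f t = g (t - t0)) (nhds t0)"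
  proof -
    have "eventually (\<lambda>t. dist t t0 < r) (nhds t0)"
      using r unfolding eventually_nhds_metric by (auto intro!: exI[of _ r])
    then show ?thesis
      by eventually_elim (use sa in \<open>auto simp: g_def sums_iff dist_real_def\<close>)
  qed
  ultimately show ?thesis using isCont_cong[of f "\<lambda>t. g (t - t0)" t0] by blast
qed

lemma box_nz:
  fixes D :: "real \<Rightarrow> real \<Rightarrow> real"
  assumes cont: "isCont (\<lambda>p. D (fst p) (snd p)) (a0, b0)" and nz: "D a0 b0 \<noteq> 0"
  shows "\<exists>\<delta>>0. \<forall>a b. \<bar>a - a0\<bar> < \<delta> \<longrightarrow> \<bar>b - b0\<bar> < \<delta> \<longrightarrow> D a b \<noteq> 0"
proof -
  have "\<bar>D a0 b0\<bar> > 0" using nz by simp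
  then obtain s where s: "s > 0" and hs: "\<And>x. x \<noteq> (a0,b0) \<Longrightarrow> norm (x - (a0,b0)) < s \<Longrightarrow>
      norm (D (fst x) (snd x) - D a0 b0) < \<bar>D a0 b0\<bar>"
    using cont unfolding isCont_def LIM_eq by fastforce
  show ?thesis
  proof (intro exI[of _ "s/2"] conjI allI impI)
    show "s/2 > 0" using s by simp
    fix a b assume a: "\<bar>a - a0\<bar> < s/2" and b: "\<bar>b - b0\<bar> < s/2"
    show "D a b \<noteq> 0"
    proof (cases "(a,b) = (a0,b0)")
      case True then show ?thesis using nz by simp
    next
      case False
      have "(a-a0)^2 < (s/2)^2"
        using power_strict_mono[of "\<bar>a-a0\<bar>" "s/2" 2] a by simp
      moreover have "(b-b0)^2 < (s/2)^2"
        using power_strict_mono[of "\<bar>b-b0\<bar>" "s/2" 2] b by simp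
      ultimately have lt: "(a-a0)^2 + (b-b0)^2 < s^2" using s by (simp add: power2_eq_square) (smt (verit) mult_pos_pos)
      have "norm ((a,b) - (a0,b0)) = sqrt ((a-a0)^2 + (b-b0)^2)"
        by (simp add: norm_Pair)
      also have "\<dots> < sqrt (s^2)" using lt by (simp only: real_sqrt_less_iff)
      also have "\<dots> = s" using s by simp
      finally have "norm ((a,b) - (a0,b0)) < s" .
      then have "norm (D a b - D a0 b0) < \<bar>D a0 b0\<bar>" using hs[OF False] by simp
      then show ?thesis by auto
    qed
  qed
qed

lemma box_unique:
  fixes G D :: "real \<Rightarrow> real \<Rightarrow> real"
  assumes deriv: "\<And>a b. ((\<lambda>a. G a b) has_real_derivative D a b) (at a)"
    and nzb: "\<And>a b. \<bar>a - a0\<bar> < \<delta> \<Longrightarrow> \<bar>b - b0\<bar> < \<delta> \<Longrightarrow> D a b \<noteq> 0"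
    and a1: "\<bar>a1 - a0\<bar> < \<delta>" and a2: "\<bar>a2 - a0\<bar> < \<delta>" and b: "\<bar>b - b0\<bar> < \<delta>"
    and z: "G a1 b = 0" "G a2 b = 0"
  shows "a1 = a2"
proof (rule ccontr)
  assume ne: "a1 \<noteq> a2"
  have main: "False" if lt: "x < y" "\<bar>x - a0\<bar> < \<delta>" "\<bar>y - a0\<bar> < \<delta>" "G x b = 0" "G y b = 0" for x y
  proof -
    have "\<exists>w. x < w \<and> w < y \<and> (*) (D w b) = (\<lambda>v. 0)"
    proof (rule Rolle_deriv[of x y "\<lambda>a. G a b"])
      show "x < y" by fact
      show "G x b = G y b" using lt by simp
      show "continuous_on {x..y} (\<lambda>a. G a b)"
        using deriv by (meson DERIV_isCont continuous_at_imp_continuous_on)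
      show "\<And>w. x < w \<Longrightarrow> w < y \<Longrightarrow> ((\<lambda>a. G a b) has_derivative (*) (D w b)) (at w)"
        using deriv unfolding has_field_derivative_def by blast
    qed
    then obtain w where w: "x < w" "w < y" "(*) (D w b) = (\<lambda>v. 0)" by blast
    then have "D w b = 0" by (metis mult.right_neutral)
    moreover have "\<bar>w - a0\<bar> < \<delta>" using lt w by auto
    ultimately show False using nzb b by blast
  qed
  show False
  proof (cases "a1 < a2")
    case True then show ?thesis using main[of a1 a2] a1 a2 z by blast
  next
    case False then have "a2 < a1" using ne by simp
    then show ?thesis using main[of a2 a1] a1 a2 z by blast
  qed
qed


lemma isCont_eps:
  fixes A :: "real \<Rightarrow> real"
  assumes "isCont A t0" "\<delta> > 0"
  shows "\<exists>e>0. \<forall>t. \<bar>t - t0\<bar> < e \<longrightarrow> \<bar>A t - A t0\<bar> < \<delta>"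
proof -
  obtain e where e: "e > 0" "\<And>x. x \<noteq> t0 \<Longrightarrow> norm (x - t0) < e \<Longrightarrow> norm (A x - A t0) < \<delta>"
    using assms unfolding isCont_def LIM_eq by blast
  show ?thesis using e assms(2) by (intro exI[of _ e]) (metis abs_zero diff_self real_norm_def)
qed

lemma curve_double:
  fixes A B :: "real \<Rightarrow> real" and G :: "real \<Rightarrow> real \<Rightarrow> real"
  assumes eta: "\<eta> > 0"
    and contA: "\<And>t. \<bar>t - t0\<bar> < \<eta> \<Longrightarrow> isCont A t"
    and contB: "\<And>t. \<bar>t - t0\<bar> < \<eta> \<Longrightarrow> isCont B t"
    and onG: "\<And>t. \<bar>t - t0\<bar> < \<eta> \<Longrightarrow> G (A t) (B t) = 0"
    and mx: "\<And>t. \<bar>t - t0\<bar> < \<eta> \<Longrightarrow> B t \<le> B t0"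
    and uniq: "\<And>a1 a2 b. \<bar>a1 - A t0\<bar> < \<delta> \<Longrightarrow> \<bar>a2 - A t0\<bar> < \<delta> \<Longrightarrow> \<bar>b - B t0\<bar> < \<delta>
         \<Longrightarrow> G a1 b = 0 \<Longrightarrow> G a2 b = 0 \<Longrightarrow> a1 = a2"
    and d: "\<delta> > 0" and e: "\<epsilon> > 0"
  shows "\<exists>s t. s \<noteq> t \<and> \<bar>s - t0\<bar> < \<epsilon> \<and> \<bar>t - t0\<bar> < \<epsilon> \<and> A s = A t \<and> B s = B t"
proof -
  obtain eA where eA: "eA > 0" "\<And>t. \<bar>t - t0\<bar> < eA \<Longrightarrow> \<bar>A t - A t0\<bar> < \<delta>"
    using isCont_eps[OF contA[of t0] d] eta by auto
  obtain eB where eB: "eB > 0" "\<And>t. \<bar>t - t0\<bar> < eB \<Longrightarrow> \<bar>B t - B t0\<bar> < \<delta>"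
    using isCont_eps[OF contB[of t0] d] eta by auto
  define h where "h = min (min \<epsilon> \<eta>) (min eA eB) / 2"
  have h: "h > 0" using eA eB eta e by (simp add: h_def)
  have inh: "\<bar>t - t0\<bar> < \<epsilon> \<and> \<bar>t - t0\<bar> < \<eta> \<and> \<bar>A t - A t0\<bar> < \<delta> \<and> \<bar>B t - B t0\<bar> < \<delta>"
    if "\<bar>t - t0\<bar> \<le> h" for t
  proof -
    have "\<bar>t - t0\<bar> < \<epsilon>" "\<bar>t - t0\<bar> < \<eta>" "\<bar>t - t0\<bar> < eA" "\<bar>t - t0\<bar> < eB"
      using that h eA eB eta e unfolding h_def by auto
    then show ?thesis using eA eB by auto
  qed
  have cB: "continuous_on {x..y} B" if "t0 - h \<le> x" "y \<le> t0 + h" for x y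
    using that inh contB by (intro continuous_at_imp_continuous_on) auto
  have pair: ?thesis if "s \<noteq> t" "\<bar>s - t0\<bar> \<le> h" "\<bar>t - t0\<bar> \<le> h" "B s = B t" for s t
  proof -
    have gs: "G (A s) (B s) = 0" using onG inh[OF that(2)] by blast
    have gt: "G (A t) (B s) = 0" using onG[of t] inh[OF that(3)] that(4) by simp
    have "A s = A t"
      by (rule uniq[OF _ _ _ gs gt]) (use inh[OF that(2)] inh[OF that(3)] in blast)+
    then show ?thesis using that inh by blast
  qed
  show ?thesis
  proof (cases "\<forall>t. t0 - h \<le> t \<and> t \<le> t0 \<longrightarrow> B t = B t0")
    case True
    have "B (t0 - h) = B t0" using True[rule_format, of "t0 - h"] h by linarith
    moreover have "t0 - h \<noteq> t0" "\<bar>t0 - h - t0\<bar> \<le> h" "\<bar>t0 - t0\<bar> \<le> h" using h by auto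
    ultimately show ?thesis using pair[of "t0 - h" t0] by blast
  next
    case notL: False
    then obtain s1 where s1: "t0 - h \<le> s1" "s1 \<le> t0" "B s1 \<noteq> B t0" by auto
    show ?thesis
    proof (cases "\<forall>t. t0 \<le> t \<and> t \<le> t0 + h \<longrightarrow> B t = B t0")
      case True
      have "B (t0 + h) = B t0" using True[rule_format, of "t0 + h"] h by linarith
      moreover have "t0 + h \<noteq> t0" "\<bar>t0 + h - t0\<bar> \<le> h" "\<bar>t0 - t0\<bar> \<le> h" using h by auto
      ultimately show ?thesis using pair[of "t0 + h" t0] by blast
    next
      case False
      then obtain t1 where t1: "t0 \<le> t1" "t1 \<le> t0 + h" "B t1 \<noteq> B t0" by auto
      have "\<bar>s1 - t0\<bar> \<le> h" using s1 by simp
      then have bs1: "B s1 < B t0" using s1(3) mx[of s1] inh[of s1] by fastforce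
      have "\<bar>t1 - t0\<bar> \<le> h" using t1 by simp
      then have bt1: "B t1 < B t0" using t1(3) mx[of t1] inh[of t1] by fastforce
      define v where "v = max (B s1) (B t1)"
      obtain s where s: "s1 \<le> s" "s \<le> t0" "B s = v"
        using IVT'[of B s1 v t0] s1 cB[of s1 t0] bs1 bt1 by (auto simp: v_def)
      obtain t where t: "t0 \<le> t" "t \<le> t1" "B t = v"
        using IVT2'[of B t1 v t0] t1 cB[of t0 t1] bs1 bt1 by (auto simp: v_def)
      have "s \<noteq> t0" "t \<noteq> t0" using s t bs1 bt1 by (auto simp: v_def)
      then have "s \<noteq> t" using s t by auto
      moreover have "B s = B t" using s t by simp
      moreover have "\<bar>s - t0\<bar> \<le> h" "\<bar>t - t0\<bar> \<le> h" using s t s1 t1 by auto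
      ultimately show ?thesis using pair[of s t] by blast
    qed
  qed
qed



lemma chart_double:
  fixes A B :: "real \<Rightarrow> real" and G D :: "real \<Rightarrow> real \<Rightarrow> real"
  assumes deriv: "\<And>a b. ((\<lambda>a. G a b) has_real_derivative D a b) (at a)"
    and contD: "isCont (\<lambda>p. D (fst p) (snd p)) (A t0, B t0)"
    and nz: "D (A t0) (B t0) \<noteq> 0"
    and eta: "\<eta> > 0"
    and contA: "\<And>t. \<bar>t - t0\<bar> < \<eta> \<Longrightarrow> isCont A t"
    and contB: "\<And>t. \<bar>t - t0\<bar> < \<eta> \<Longrightarrow> isCont B t"
    and onG: "\<And>t. \<bar>t - t0\<bar> < \<eta> \<Longrightarrow> G (A t) (B t) = 0"
    and mx: "\<And>t. \<bar>t - t0\<bar> < \<eta> \<Longrightarrow> B t \<le> B t0"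
    and e: "\<epsilon> > 0"
  shows "\<exists>s t. s \<noteq> t \<and> \<bar>s - t0\<bar> < \<epsilon> \<and> \<bar>t - t0\<bar> < \<epsilon> \<and> A s = A t \<and> B s = B t"
proof -
  obtain \<delta> where d: "\<delta> > 0" and nzb: "\<And>a b. \<bar>a - A t0\<bar> < \<delta> \<Longrightarrow> \<bar>b - B t0\<bar> < \<delta> \<Longrightarrow> D a b \<noteq> 0"
    using box_nz[OF contD nz] by blast
  have uniq: "a1 = a2" if "\<bar>a1 - A t0\<bar> < \<delta>" "\<bar>a2 - A t0\<bar> < \<delta>" "\<bar>b - B t0\<bar> < \<delta>" "G a1 b = 0" "G a2 b = 0" for a1 a2 b
    using that box_unique[of G D "A t0" \<delta> "B t0", OF deriv nzb] by blast
  show ?thesis by (rule curve_double[of \<eta> t0 A B G \<delta> \<epsilon>, OF eta contA contB onG mx uniq d e])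
qed

lemma const_finite:
  fixes f :: "real \<Rightarrow> real"
  assumes cont: "\<And>t. isCont f t" and fin: "finite F" and inF: "\<And>t. f t \<in> F"
  shows "f s = f t"
proof (rule ccontr)
  assume ne: "f s \<noteq> f t"
  have sub: "{min (f s) (f t) .. max (f s) (f t)} \<subseteq> F"
  proof
    fix y assume y: "y \<in> {min (f s) (f t) .. max (f s) (f t)}"
    have c: "continuous_on {x..z} f" for x z using cont by (simp add: continuous_at_imp_continuous_on)
    have "\<exists>x. f x = y"
    proof (cases "s \<le> t")
      case True
      show ?thesis
      proof (cases "f s \<le> f t")
        case True2: True
        then show ?thesis using IVT'[of f s y t] y True c by auto
      next
        case False
        then show ?thesis using IVT2'[of f t y s] y True c by auto
      qed
    next
      case False
      show ?thesis
      proof (cases "f t \<le> f s")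
        case True2: True
        then show ?thesis using IVT'[of f t y s] y False c by auto
      next
        case False2: False
        then show ?thesis using IVT2'[of f s y t] y False c by auto
      qed
    qed
    then show "y \<in> F" using inF by auto
  qed
  have "min (f s) (f t) < max (f s) (f t)" using ne by auto
  then have "infinite {min (f s) (f t) .. max (f s) (f t)}" by simp
  then show False using sub fin finite_subset by blast
qed

lemma frac_distinct:
  fixes s t :: real
  assumes "s \<noteq> t" "\<bar>s - t\<bar> < 1"
  shows "frac s \<noteq> frac t"
proof
  assume eq: "frac s = frac t"
  have "s - t = of_int (\<lfloor>s\<rfloor> - \<lfloor>t\<rfloor>)" using eq unfolding frac_def by simp
  then obtain k :: int where k: "s - t = of_int k" by blast
  then have "\<bar>k\<bar> < 1" using assms(2) by (metis of_int_abs of_int_less_1_iff)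
  then have "k = 0" by simp
  then show False using k assms(1) by simp
qed

lemma periodic_int:
  fixes g :: "real \<Rightarrow> 'a"
  assumes per: "\<And>t. g (t + 1) = g t"
  shows "g (frac t) = g t"
proof -
  have nat: "g (x + real n) = g x" for x n
  proof (induction n)
    case (Suc n)
    have "x + real (Suc n) = (x + real n) + 1" by simp
    then show ?case using per Suc by metis
  qed simp
  have "t = frac t + of_int \<lfloor>t\<rfloor>" unfolding frac_def by simp
  show ?thesis
  proof (cases "\<lfloor>t\<rfloor> \<ge> 0")
    case True
    then have "t = frac t + real (nat \<lfloor>t\<rfloor>)" unfolding frac_def by simp
    then show ?thesis using nat[of "frac t" "nat \<lfloor>t\<rfloor>"] by simp
  next
    case False
    then have "frac t = t + real (nat (- \<lfloor>t\<rfloor>))" unfolding frac_def by simp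
    then show ?thesis using nat[of t "nat (- \<lfloor>t\<rfloor>)"] by simp
  qed
qed

lemma periodic_max:
  fixes g :: "real \<Rightarrow> real"
  assumes per: "\<And>t. g (frac t) = g t" and cont: "\<And>t. isCont g t"
  shows "\<exists>t0. \<forall>t. g t \<le> g t0"
proof -
  have "continuous_on {0..1} g" using cont by (simp add: continuous_at_imp_continuous_on)
  then obtain t0 where "\<forall>y\<in>{0..1}. g y \<le> g t0"
    using continuous_attains_sup[of "{0..1::real}" g] by auto
  then have "g t \<le> g t0" for t using per[of t] frac_ge_0[of t] frac_lt_1[of t] by (metis atLeastAtMost_iff less_eq_real_def)
  then show ?thesis by blast
qed


lemma Dr_isCont2:
  fixes fb fc :: "real \<times> real \<Rightarrow> real"
  assumes "continuous_on UNIV fb" "continuous_on UNIV fc"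
  shows "isCont (\<lambda>p. Dr l n (fst p) (fb p) (fc p)) x"
proof -
  have "continuous_on UNIV (\<lambda>p. Dr l n (fst p) (fb p) (fc p))"
    using Dr_cont[of UNIV fst fb fc l n] assms continuous_on_fst[OF continuous_on_id] by auto
  then show ?thesis using continuous_on_eq_continuous_at[of UNIV] by auto
qed

lemma roots_mu0:
  assumes "R l l a 0 1 = 0"
  shows "a \<in> (\<lambda>i. - dd l i) ` {..<l}"
proof -
  have "(\<Prod>i<l. a + 1 * dd l i) = 0" using assms R_mu0[of l l a 1] by simp
  then obtain i where "i < l" "a + dd l i = 0" by auto
  then show ?thesis by (intro image_eqI[of _ _ i]) auto
qed

lemma affine_part: "\<not> is_oval_aff l S"
proof
  assume "is_oval_aff l S"
  then obtain \<gamma> :: "real \<Rightarrow> real \<times> real" where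
    an1: "real_analytic (\<lambda>t. fst (\<gamma> t))" and an2: "real_analytic (\<lambda>t. snd (\<gamma> t))"
    and per: "\<And>t. \<gamma> (t + 1) = \<gamma> t" and ncst: "\<exists>s t. \<gamma> s \<noteq> \<gamma> t"
    and img: "\<gamma> ` UNIV = S" and sub: "S \<subseteq> Gamma l"
    and inj: "\<And>s t. 0 \<le> s \<and> s < 1 \<and> 0 \<le> t \<and> t < 1 \<and> s \<noteq> t \<and> \<gamma> s = \<gamma> t \<Longrightarrow> sing_aff l (\<gamma> s)"
    unfolding is_oval_aff_def by blast
  define L where "L t = fst (\<gamma> t)" for t
  define M where "M t = snd (\<gamma> t)" for t
  have cL: "isCont L t" for t unfolding L_def using analytic_isCont[OF an1] .
  have cM: "isCont M t" for t unfolding M_def using analytic_isCont[OF an2] .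
  have onC: "R l l (L t) (M t) 1 = 0" for t
  proof -
    have "\<gamma> t \<in> Gamma l" using img sub by blast
    then show ?thesis by (simp add: Gamma_def L_def M_def Q_R split: prod.splits)
  qed
  have perg: "\<gamma> (frac t) = \<gamma> t" for t by (rule periodic_int[of \<gamma>, OF per])
  have inj2: "sing_aff l (\<gamma> s)" if "s \<noteq> t" "\<bar>s - t\<bar> < 1" "\<gamma> s = \<gamma> t" for s t
  proof -
    have "frac s \<noteq> frac t" using frac_distinct that by blast
    then have "sing_aff l (\<gamma> (frac s))"
      using inj[of "frac s" "frac t"] perg[of s] perg[of t] that(3) frac_lt_1[of s] frac_lt_1[of t] frac_ge_0[of s] frac_ge_0[of t] by simp
    then show ?thesis using perg by simp
  qed
  have nonsing: "snd p = 0" if "sing_aff l p" for p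
  proof (rule ccontr)
    assume nz: "snd p \<noteq> 0"
    have q: "R l l (fst p) (snd p) 1 = 0" and d0: "((\<lambda>x. R l l x (snd p) 1) has_real_derivative 0) (at (fst p))"
      using that unfolding sing_aff_def Q_R by auto
    have "Dr l l (fst p) (snd p) 1 = 0" using DERIV_unique[OF R_deriv d0] .
    then show False using simple_root[OF nz q] by simp
  qed
  have ext: False if sg: "\<sigma> * \<sigma> = 1" and mx: "\<And>t. \<sigma> * M t \<le> \<sigma> * M t0" and m0: "M t0 \<noteq> 0" for \<sigma> t0
  proof -
    have ssM: "\<sigma> * (\<sigma> * x) = x" for x using sg by (metis mult.assoc mult_1)
    have "\<bar>M t0\<bar> > 0" using m0 by simp
    then obtain e0 where e0: "e0 > 0" "\<And>t. \<bar>t - t0\<bar> < e0 \<Longrightarrow> \<bar>M t - M t0\<bar> < \<bar>M t0\<bar>"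
      using isCont_eps[OF cM] by blast
    have "\<exists>s t. s \<noteq> t \<and> \<bar>s - t0\<bar> < min e0 (1/2) \<and> \<bar>t - t0\<bar> < min e0 (1/2)
       \<and> L s = L t \<and> \<sigma> * M s = \<sigma> * M t"
    proof (rule chart_double[where G="\<lambda>a b. R l l a (\<sigma> * b) 1" and D="\<lambda>a b. Dr l l a (\<sigma> * b) 1" and \<eta>=1])
      show "((\<lambda>a. R l l a (\<sigma> * b) 1) has_real_derivative Dr l l a (\<sigma> * b) 1) (at a)" for a b
        by (rule R_deriv)
      show "isCont (\<lambda>p. Dr l l (fst p) (\<sigma> * snd p) 1) (L t0, \<sigma> * M t0)"
        by (rule Dr_isCont2) (auto intro!: continuous_intros continuous_on_snd continuous_on_id)
      show "Dr l l (L t0) (\<sigma> * (\<sigma> * M t0)) 1 \<noteq> 0"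
        unfolding ssM using simple_root[OF m0 onC] .
      show "R l l (L t) (\<sigma> * (\<sigma> * M t)) 1 = 0" for t unfolding ssM by (rule onC)
      show "isCont (\<lambda>t. \<sigma> * M t) t" for t using cM by (auto intro: continuous_intros)
    qed (use cL mx e0 in auto)
    then obtain s t where st: "s \<noteq> t" "\<bar>s - t0\<bar> < min e0 (1/2)" "\<bar>t - t0\<bar> < min e0 (1/2)"
      "L s = L t" "\<sigma> * M s = \<sigma> * M t" by blast
    have "M s = M t" using st(5) ssM by metis
    then have "\<gamma> s = \<gamma> t" using st(4) unfolding L_def M_def by (simp add: prod_eq_iff)
    moreover have "\<bar>s - t\<bar> < 1" using st(2,3) by linarith
    ultimately have "M s = 0" using inj2[OF st(1)] nonsing unfolding M_def by blast
    moreover have "\<bar>M s - M t0\<bar> < \<bar>M t0\<bar>" using e0 st by auto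
    ultimately show False by simp
  qed
  have perM: "M (frac t) = M t" for t unfolding M_def using perg by simp
  obtain tmax where tmax: "\<And>t. M t \<le> M tmax" using periodic_max[of M, OF perM cM] by blast
  obtain tmin where tmin: "\<And>t. - M t \<le> - M tmin"
    using periodic_max[of "\<lambda>t. - M t"] perM cM by (auto intro: continuous_intros)
  have m1: "M tmax = 0" using ext[of 1 tmax] tmax by force
  have m2: "M tmin = 0" using ext[of "-1" tmin] tmin by force
  have M0: "M t = 0" for t using tmax[of t] tmin[of t] m1 m2 by simp
  have "L s = L t" for s t
    by (rule const_finite[OF cL, of "(\<lambda>i. - dd l i) ` {..<l}"]) (use roots_mu0 onC M0 in auto)
  then have "\<gamma> s = \<gamma> t" for s t using M0 unfolding L_def M_def by (simp add: prod_eq_iff)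
  then show False using ncst by blast
qed


lemma proj_self: "v \<in> proj_pt v"
  unfolding proj_pt_def by (auto intro!: exI[of _ 1])

lemma proj_eq_D:
  assumes "proj_pt v = proj_pt w"
  shows "\<exists>c. c \<noteq> 0 \<and> v = (c * fst w, c * fst (snd w), c * snd (snd w))"
  using proj_self[of v] assms unfolding proj_pt_def by auto

lemma proj_scale:
  assumes "k \<noteq> 0"
  shows "proj_pt (k * a, k * b, k * d) = proj_pt (a, b, d)"
proof
  show "proj_pt (k * a, k * b, k * d) \<subseteq> proj_pt (a, b, d)"
  proof
    fix x assume "x \<in> proj_pt (k * a, k * b, k * d)"
    then obtain c where c: "c \<noteq> 0" "x = (c * (k * a), c * (k * b), c * (k * d))" unfolding proj_pt_def by auto
    then have "x = ((c * k) * a, (c * k) * b, (c * k) * d)" by simp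
    then show "x \<in> proj_pt (a, b, d)" unfolding proj_pt_def using c assms by auto
  qed
  show "proj_pt (a, b, d) \<subseteq> proj_pt (k * a, k * b, k * d)"
  proof
    fix x assume "x \<in> proj_pt (a, b, d)"
    then obtain c where c: "c \<noteq> 0" "x = (c * a, c * b, c * d)" unfolding proj_pt_def by auto
    then have "x = ((c / k) * (k * a), (c / k) * (k * b), (c / k) * (k * d))" using assms by auto
    then show "x \<in> proj_pt (k * a, k * b, k * d)" unfolding proj_pt_def using c assms
      by (intro CollectI exI[of _ "c / k"]) simp
  qed
qed

lemma closure_upper_sign:
  assumes "in_closure_upper v"
  shows "fst (snd v) * snd (snd v) \<ge> 0"
proof -
  obtain w :: "nat \<Rightarrow> real \<times> real \<times> real" where
    w: "\<And>n. snd (snd (w n)) \<noteq> 0 \<and> fst (snd (w n)) / snd (snd (w n)) > 0"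
    and l2: "(\<lambda>n. fst (snd (w n))) \<longlonglongrightarrow> fst (snd v)"
    and l3: "(\<lambda>n. snd (snd (w n))) \<longlonglongrightarrow> snd (snd v)"
    using assms unfolding in_closure_upper_def by blast
  have pos: "fst (snd (w n)) * snd (snd (w n)) \<ge> 0" for n
    using w[of n] by (auto simp: zero_less_divide_iff zero_le_mult_iff)
  have "(\<lambda>n. fst (snd (w n)) * snd (snd (w n))) \<longlonglongrightarrow> fst (snd v) * snd (snd v)"
    by (rule tendsto_mult[OF l2 l3])
  then show ?thesis using pos by (intro LIMSEQ_le_const) auto
qed

lemma R_00: "R l l a 0 0 = a ^ l"
  using R_mu0[of l l a 0] by simp

lemma R_chart:
  assumes "k \<noteq> 0"
  shows "R l l a b c = 0 \<longleftrightarrow> R l l (a / k) (b / k) (c / k) = 0"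
proof -
  have "R l l a b c = R l l (k * (a/k)) (k * (b/k)) (k * (c/k))" using assms by simp
  also have "\<dots> = k ^ l * R l l (a / k) (b / k) (c / k)" by (rule R_hom)
  finally show ?thesis using assms by simp
qed


lemma mono_ratio:
  fixes b b0 :: real
  assumes "b \<ge> 0" "b0 \<ge> 0" "b / (b + 1) \<le> b0 / (b0 + 1)"
  shows "b \<le> b0"
proof -
  have "b * (b0 + 1) \<le> b0 * (b + 1)" using assms by (simp add: field_simps)
  then show ?thesis by (simp add: algebra_simps)
qed

lemma proj_part: "\<not> (\<exists>S. is_oval_proj l S \<and> (\<forall>p\<in>S. \<forall>v\<in>p. in_closure_upper v))"
proof
  assume "\<exists>S. is_oval_proj l S \<and> (\<forall>p\<in>S. \<forall>v\<in>p. in_closure_upper v)"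
  then obtain S where S: "is_oval_proj l S" and up: "\<forall>p\<in>S. \<forall>v\<in>p. in_closure_upper v" by blast
  then obtain F where
    an1: "real_analytic (\<lambda>t. fst (F t))" and an2: "real_analytic (\<lambda>t. fst (snd (F t)))"
    and an3: "real_analytic (\<lambda>t. snd (snd (F t)))"
    and nz3: "\<forall>t. F t \<noteq> (0, 0, 0)"
    and per0: "\<forall>t. proj_pt (F (t + 1)) = proj_pt (F t)"
    and ncst: "\<exists>s t. proj_pt (F s) \<noteq> proj_pt (F t)"
    and img: "(\<lambda>t. proj_pt (F t)) ` UNIV = S"
    and onQ: "\<forall>t. Qh l (fst (F t)) (fst (snd (F t))) (snd (snd (F t))) = 0"
    and inj0: "\<forall>s t. 0 \<le> s \<and> s < 1 \<and> 0 \<le> t \<and> t < 1 \<and> s \<noteq> t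
           \<and> proj_pt (F s) = proj_pt (F t) \<longrightarrow> sing_proj l (F s)"
    using S unfolding is_oval_proj_def
    apply -
    apply (erule exE)
    apply (elim conjE)
    apply (rule that)
    apply assumption+
    done
  have per: "proj_pt (F (t + 1)) = proj_pt (F t)" for t using per0 by blast
  have inj: "sing_proj l (F s)" if "0 \<le> s \<and> s < 1 \<and> 0 \<le> t \<and> t < 1 \<and> s \<noteq> t
           \<and> proj_pt (F s) = proj_pt (F t)" for s t
    using inj0 that by blast
  define X where "X t = fst (F t)" for t
  define Y where "Y t = fst (snd (F t))" for t
  define Z where "Z t = snd (snd (F t))" for t
  have Fe: "F t = (X t, Y t, Z t)" for t unfolding X_def Y_def Z_def by simp
  have cX: "isCont X t" for t unfolding X_def using analytic_isCont[OF an1] .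
  have cY: "isCont Y t" for t unfolding Y_def using analytic_isCont[OF an2] .
  have cZ: "isCont Z t" for t unfolding Z_def using analytic_isCont[OF an3] .
  have onC: "R l l (X t) (Y t) (Z t) = 0" for t using onQ[rule_format, of t] unfolding Qh_R X_def Y_def Z_def .
  have YZ: "Y t * Z t \<ge> 0" for t
  proof -
    have "in_closure_upper (F t)" using up img proj_self[of "F t"] by blast
    then show ?thesis using closure_upper_sign unfolding Y_def Z_def by blast
  qed
  have notboth: "\<not> (Y t = 0 \<and> Z t = 0)" for t
  proof
    assume a: "Y t = 0 \<and> Z t = 0"
    then have "X t \<noteq> 0" using nz3 Fe[of t] by metis
    then have "R l l (X t) 0 0 \<noteq> 0" using R_00 by simp
    then show False using onC[of t] a by simp
  qed
  have den: "Y t + Z t \<noteq> 0" for t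
  proof
    assume "Y t + Z t = 0"
    then have "Z t = - Y t" by simp
    then have "Y t * Z t = - (Y t * Y t)" by simp
    then have "Y t * Y t = 0" using YZ[of t] zero_le_square[of "Y t"] by linarith
    then have "Y t = 0" by simp
    then show False using notboth[of t] \<open>Z t = - Y t\<close> by simp
  qed
  define \<rho> where "\<rho> t = Y t / (Y t + Z t)" for t
  have c\<rho>: "isCont \<rho> t" for t unfolding \<rho>_def using cY cZ den by (auto intro!: continuous_intros)
  have \<rho>nn: "\<rho> t \<ge> 0" for t
  proof (cases "Y t > 0")
    case True
    then have "Z t \<ge> 0" using YZ[of t] by (simp add: zero_le_mult_iff)
    then show ?thesis unfolding \<rho>_def using True by simp
  next
    case False
    show ?thesis
    proof (cases "Y t = 0")
      case True then show ?thesis unfolding \<rho>_def by simp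
    next
      case False2: False
      then have "Y t < 0" using False by simp
      then have "Z t \<le> 0" using YZ[of t] by (simp add: zero_le_mult_iff)
      then show ?thesis unfolding \<rho>_def using \<open>Y t < 0\<close> by (simp add: zero_le_divide_iff)
    qed
  qed
  have perF: "proj_pt (F (frac t)) = proj_pt (F t)" for t
    by (rule periodic_int[of "\<lambda>t. proj_pt (F t)", OF per])
  have scl: "\<exists>c. c \<noteq> 0 \<and> X (frac t) = c * X t \<and> Y (frac t) = c * Y t \<and> Z (frac t) = c * Z t" for t
    using proj_eq_D[OF perF[of t]] unfolding X_def Y_def Z_def by auto
  have per\<rho>: "\<rho> (frac t) = \<rho> t" for t
  proof -
    obtain c where c: "c \<noteq> 0" "X (frac t) = c * X t" "Y (frac t) = c * Y t" "Z (frac t) = c * Z t"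
      using scl by blast
    have "c * Y t + c * Z t = c * (Y t + Z t)" by (simp add: algebra_simps)
    then show ?thesis unfolding \<rho>_def using c by simp
  qed
  have nonsing: "Y u = 0" if "sing_proj l (F u)" for u
  proof (rule ccontr)
    assume nz: "Y u \<noteq> 0"
    have d0: "((\<lambda>a. R l l a (Y u) (Z u)) has_real_derivative 0) (at (X u))"
      using that unfolding sing_proj_def Fe[of u] Qh_R by auto
    have "Dr l l (X u) (Y u) (Z u) = 0" using DERIV_unique[OF R_deriv d0] .
    then show False using simple_root[OF nz onC[of u]] by simp
  qed
  have key: False if "s \<noteq> t" "\<bar>s - t\<bar> < 1" "Y s \<noteq> 0" "proj_pt (F s) = proj_pt (F t)" for s t
  proof -
    have "frac s \<noteq> frac t" using frac_distinct that by blast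
    then have "sing_proj l (F (frac s))"
      using inj[of "frac s" "frac t"] perF[of s] perF[of t] that(4) frac_lt_1[of s] frac_lt_1[of t]
        frac_ge_0[of s] frac_ge_0[of t] by simp
    then have "Y (frac s) = 0" by (rule nonsing)
    moreover obtain c where "c \<noteq> 0" "Y (frac s) = c * Y s" using scl by blast
    ultimately show False using that(3) by simp
  qed
  obtain t0 where t0: "\<And>t. \<rho> t \<le> \<rho> t0" using periodic_max[of \<rho>, OF per\<rho> c\<rho>] by blast
  show False
  proof (cases "\<rho> t0 = 0")
    case True
    then have "\<rho> t = 0" for t using t0[of t] \<rho>nn[of t] by simp
    then have Y0: "Y t = 0" for t unfolding \<rho>_def using den by simp
    then have Znz: "Z t \<noteq> 0" for t using notboth by blast
    define x where "x t = X t / Z t" for t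
    have cx: "isCont x t" for t unfolding x_def using cX cZ Znz by (auto intro!: continuous_intros)
    have "R l l (x t) 0 1 = 0" for t
      using onC[of t] R_chart[OF Znz[of t], of l "X t" "Y t" "Z t"] Y0[of t] Znz[of t] unfolding x_def by simp
    then have "x s = x t" for s t
      by (intro const_finite[OF cx, of "(\<lambda>i. - dd l i) ` {..<l}"]) (use roots_mu0 in auto)
    then have "proj_pt (F s) = proj_pt (F t)" for s t
    proof -
      have "F u = (Z u * x 0, Z u * 0, Z u * 1)" for u
        using Fe[of u] Y0[of u] Znz[of u] \<open>\<And>s t. x s = x t\<close>[of 0 u] unfolding x_def by simp
      then have "proj_pt (F u) = proj_pt (x 0, 0, 1)" for u using proj_scale Znz by metis
      then show ?thesis by simp
    qed
    then show False using ncst by blast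
  next
    case not0: False
    then have Y0nz: "Y t0 \<noteq> 0" unfolding \<rho>_def by auto
    have "\<bar>Y t0\<bar> > 0" using Y0nz by simp
    then obtain eY where eY: "eY > 0" "\<And>t. \<bar>t - t0\<bar> < eY \<Longrightarrow> \<bar>Y t - Y t0\<bar> < \<bar>Y t0\<bar>"
      using isCont_eps[OF cY] by blast
    have Ynz: "Y t \<noteq> 0" if "\<bar>t - t0\<bar> < eY" for t using eY(2)[OF that] by auto
    show False
    proof (cases "Z t0 = 0")
      case True
      define A where "A t = X t / Y t" for t
      define B where "B t = - (Z t / Y t)" for t
      have onG: "R l l (A t) 1 (- B t) = 0" if "\<bar>t - t0\<bar> < eY" for t
        using onC[of t] R_chart[OF Ynz[OF that], of l "X t" "Y t" "Z t"] Ynz[OF that]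
        unfolding A_def B_def by simp
      have "\<exists>s t. s \<noteq> t \<and> \<bar>s - t0\<bar> < min eY (1/2) \<and> \<bar>t - t0\<bar> < min eY (1/2) \<and> A s = A t \<and> B s = B t"
      proof (rule chart_double[where G="\<lambda>a b. R l l a 1 (- b)" and D="\<lambda>a b. Dr l l a 1 (- b)" and \<eta>=eY])
        show "((\<lambda>a. R l l a 1 (- b)) has_real_derivative Dr l l a 1 (- b)) (at a)" for a b
          by (rule R_deriv)
        show "isCont (\<lambda>p. Dr l l (fst p) 1 (- snd p)) (A t0, B t0)"
          by (rule Dr_isCont2) (auto intro!: continuous_intros continuous_on_snd continuous_on_id)
        show "Dr l l (A t0) 1 (- B t0) \<noteq> 0"
          using simple_root[of 1 l "A t0" "- B t0"] onG[of t0] eY by simp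
        show "isCont A t" if "\<bar>t - t0\<bar> < eY" for t
          unfolding A_def using cX cY Ynz[OF that] by (auto intro!: continuous_intros)
        show "isCont B t" if "\<bar>t - t0\<bar> < eY" for t
          unfolding B_def using cZ cY Ynz[OF that] by (auto intro!: continuous_intros)
        show "B t \<le> B t0" if "\<bar>t - t0\<bar> < eY" for t
        proof -
          have "Z t / Y t \<ge> 0" using YZ[of t] Ynz[OF that]
            by (auto simp: zero_le_divide_iff zero_le_mult_iff) 
          then show ?thesis unfolding B_def using True by simp
        qed
      qed (use onG eY in auto)
      then obtain s t where st: "s \<noteq> t" "\<bar>s - t0\<bar> < min eY (1/2)" "\<bar>t - t0\<bar> < min eY (1/2)"
        "A s = A t" "B s = B t" by blast
      have ys: "Y s \<noteq> 0" and yt: "Y t \<noteq> 0" using Ynz st(2,3) by auto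
      have "F s = ((Y s / Y t) * X t, (Y s / Y t) * Y t, (Y s / Y t) * Z t)"
      proof -
        have "X s = (Y s / Y t) * X t" using st(4) ys yt unfolding A_def by (simp add: field_simps)
        moreover have "Z s = (Y s / Y t) * Z t" using st(5) ys yt unfolding B_def by (simp add: field_simps)
        ultimately show ?thesis using Fe[of s] yt by simp
      qed
      then have "proj_pt (F s) = proj_pt ((Y s / Y t) * X t, (Y s / Y t) * Y t, (Y s / Y t) * Z t)" by simp
      also have "\<dots> = proj_pt (X t, Y t, Z t)" by (rule proj_scale) (use ys yt in simp)
      finally have "proj_pt (F s) = proj_pt (F t)" using Fe[of t] by simp
      moreover have "\<bar>s - t\<bar> < 1" using st(2,3) by linarith
      ultimately show False using key[OF st(1) _ ys] by blast
    next
      case Znz0: False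
      have "\<bar>Z t0\<bar> > 0" using Znz0 by simp
      then obtain eZ where eZ: "eZ > 0" "\<And>t. \<bar>t - t0\<bar> < eZ \<Longrightarrow> \<bar>Z t - Z t0\<bar> < \<bar>Z t0\<bar>"
        using isCont_eps[OF cZ] by blast
      define \<eta> where "\<eta> = min eY eZ"
      have eta: "\<eta> > 0" using eY eZ by (simp add: \<eta>_def)
      have nzs: "Y t \<noteq> 0 \<and> Z t \<noteq> 0" if "\<bar>t - t0\<bar> < \<eta>" for t
        using Ynz[of t] eZ(2)[of t] that unfolding \<eta>_def by auto
      define A where "A t = X t / Z t" for t
      define B where "B t = Y t / Z t" for t
      have onG: "R l l (A t) (B t) 1 = 0" if "\<bar>t - t0\<bar> < \<eta>" for t
        using onC[of t] R_chart[of "Z t" l "X t" "Y t" "Z t"] nzs[OF that]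
        unfolding A_def B_def by simp
      have Bnn: "B t \<ge> 0" for t unfolding B_def using YZ[of t]
        by (auto simp: zero_le_divide_iff zero_le_mult_iff)
      have \<rho>B: "\<rho> t = B t / (B t + 1)" if "Z t \<noteq> 0" for t
        unfolding \<rho>_def B_def using that den[of t] by (simp add: field_simps)
      have "\<exists>s t. s \<noteq> t \<and> \<bar>s - t0\<bar> < min \<eta> (1/2) \<and> \<bar>t - t0\<bar> < min \<eta> (1/2) \<and> A s = A t \<and> B s = B t"
      proof (rule chart_double[where G="\<lambda>a b. R l l a b 1" and D="\<lambda>a b. Dr l l a b 1" and \<eta>=\<eta>])
        show "((\<lambda>a. R l l a b 1) has_real_derivative Dr l l a b 1) (at a)" for a b
          by (rule R_deriv)
        show "isCont (\<lambda>p. Dr l l (fst p) (snd p) 1) (A t0, B t0)"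
          by (rule Dr_isCont2) (auto intro!: continuous_intros continuous_on_snd continuous_on_id)
        have "B t0 \<noteq> 0" unfolding B_def using Y0nz Znz0 by simp
        then show "Dr l l (A t0) (B t0) 1 \<noteq> 0"
          using simple_root[of "B t0" l "A t0" 1] onG[of t0] eta by simp
        show "isCont A t" if "\<bar>t - t0\<bar> < \<eta>" for t
          unfolding A_def using cX cZ nzs[OF that] by (auto intro!: continuous_intros)
        show "isCont B t" if "\<bar>t - t0\<bar> < \<eta>" for t
          unfolding B_def using cY cZ nzs[OF that] by (auto intro!: continuous_intros)
        show "B t \<le> B t0" if "\<bar>t - t0\<bar> < \<eta>" for t
          using mono_ratio[OF Bnn Bnn] t0[of t] \<rho>B[of t] \<rho>B[of t0] nzs[OF that] Znz0 by simp
      qed (use onG eta in auto)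
      then obtain s t where st: "s \<noteq> t" "\<bar>s - t0\<bar> < min \<eta> (1/2)" "\<bar>t - t0\<bar> < min \<eta> (1/2)"
        "A s = A t" "B s = B t" by blast
      have ns: "Y s \<noteq> 0" "Z s \<noteq> 0" and nt: "Z t \<noteq> 0" using nzs st(2,3) by auto
      have "F s = ((Z s / Z t) * X t, (Z s / Z t) * Y t, (Z s / Z t) * Z t)"
      proof -
        have "X s = (Z s / Z t) * X t" using st(4) ns nt unfolding A_def by (simp add: field_simps)
        moreover have "Y s = (Z s / Z t) * Y t" using st(5) ns nt unfolding B_def by (simp add: field_simps)
        ultimately show ?thesis using Fe[of s] nt by simp
      qed
      then have "proj_pt (F s) = proj_pt ((Z s / Z t) * X t, (Z s / Z t) * Y t, (Z s / Z t) * Z t)" by simp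
      also have "\<dots> = proj_pt (X t, Y t, Z t)" by (rule proj_scale) (use ns nt in simp)
      finally have "proj_pt (F s) = proj_pt (F t)" using Fe[of t] by simp
      moreover have "\<bar>s - t\<bar> < 1" using st(2,3) by linarith
      ultimately show False using key[OF st(1) _ ns(1)] by blast
    qed
  qed
qed

theorem theorem1p8:
  fixes l :: nat
  shows "\<not> (\<exists>S. is_oval_aff l S)
       \<and> \<not> (\<exists>S. is_oval_proj l S \<and> (\<forall>p\<in>S. \<forall>v\<in>p. in_closure_upper v))"
  using affine_part proj_part by blast

end
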